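(* Consider the Polyhedral Clinching Auction run on the modified market as described in the context. At the moment just before the clinching step of any iteration, with $x_i=w(E_i)$ for the current $w$ and $d$ the current demands, for every $S\subseteq N$, $$g_{x,d}(S)=\min_{S'\subseteq S}\{f(E_{S'})-x(S')+d(S\setminus S')\}.$$
   Context: Market model. Buyers $N_0=\{1,\dots,n\}$, sellers $M=\{1,\dots,m\}$, bipartite edge set $E_0\subseteq N_0\times M$; edge $(i,j)$ written $ij$; for a set $S$ of participants $E_S$ is the set of edges incident to a member of $S$ ($E_i=E_{\{i\}}$); $w(F)=\sum_{e\in F}w_e$. Each seller $j$ has a monotone submodular $f_j:2^{E_j}\to\mathbb R_+$, $f_j(\emptyset)=0$. Buyer $i$ has per-unit valuation $v_i>0$ and budget $B_i\ge0$; seller $j$ has per-unit valuation $\rho_j>0$. Modified market. For each seller $j$ add a virtual buyer $n+j$ adjacent only to $j$ with $v_{n+j}=\rho_j$, $B_{n+j}=\infty$; $N=\{1,\dots,n+m\}$, $E=E_0\cup\{(n+j)j\}$; extend $f_j$ by $f_j(F)=f_j(E_j)$ if $(n+j)j\in F$, unchanged otherwise; $P_j=\{y\in\mathbb R^{E_j}_+:y(F)\le f_j(F)\ \forall F\}$, $P=\{w\in\mathbb R^E_+:w|_{E_j}\in P_j\ \forall j\}$, $f(S)=\sum_jf_j(S\cap E_j)$. For $x\in\mathbb R^N_+$, $d\in[0,\infty]^N$ and $S\subseteq N$: $g_{x,d}(S)=\min_{S'\subseteq S}\bigl\{\min_{S'\subseteq S''\subseteq N}\{f(E_{S''})-x(S'')\}+d(S\setminus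 S')\bigr\}$. Polyhedral Clinching Auction (PCA) with step $\varepsilon>0$: bids $v'_i$ for $i\in N$ (virtual buyer $n+j$ bids seller $j$'s bid), all assumed to be positive integer multiples of $\varepsilon$. State: $w\in\mathbb R^E_+$, payments $p$, revenues $r$, price clocks $c_i$, demands $d_i\in[0,\infty]$; initially $w=0,p=0,r=0$, $c_i=0$, $d_i=\infty$, pointer $l=1$. For $w,d$ let $P_{w,d}=\{y\in\mathbb R^E_+: w+y\in P,\ y(E_k)\le d_k\ \forall k\}$ and for $\xi\in\mathbb R^{E_i}_+$ let $P^i_{w,d}(\xi)=\{u\in\mathbb R^{N\setminus\{i\}}_+:\exists y\in P_{w,d},\ y|_{E_i}=\xi,\ y(E_k)=u_k\ \forall k\ne i\}$. While some $d_i\neq 0$, an iteration does: (1) clinching step: for $i=1,\dots,n+m$ in turn, choose a maximal $\xi_i\in\mathbb R^{E_i}_+$ with $P^i_{w,d}(\xi_i)=P^i_{w,d}(0)$, set $p_i\leftarrow p_i+c_i\xi_i(E_i)$, $w_{ij}\leftarrow w_{ij}+\xi_{ij}$, and reset every demand to $d_k=(B_k-p_k)/c_k$ if $c_k<v'_k$ and $d_k=0$ otherwise ($d_k=\infty$ while $c_k=0$); then $r_j\leftarrow r_j+\sum_{ij\in E_j}c_i\xi_{ij}$; (2) $c_l\leftarrow c_l+\varepsilon$ and $d_l\leftarrow(B_l-p_l)/c_l$ if $c_l<v'_l$, else $d_l\leftarrow0$; (3) advance $l$ cyclically. *)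

theory Defs
  imports Complex_Main "HOL-Library.Extended_Real"
begin

text \<open>Buyers 1..n are real buyers, buyers n+1..n+m are
  the virtual buyers (n+j is attached to seller j); sellers are 1..m.
  An edge ij is the pair (i,j) (buyer, seller). Vectors on edges/buyers are total
  functions that vanish outside their index set.\<close>

definition Nset :: "nat \<Rightarrow> nat \<Rightarrow> nat set" where
  "Nset n m = {1..n+m}"

definition Mset :: "nat \<Rightarrow> nat set" where
  "Mset m = {1..m}"

definition Eall :: "nat \<Rightarrow> nat \<Rightarrow> (nat \<times> nat) set \<Rightarrow> (nat \<times> nat) set" where
  "Eall n m E0 = E0 \<union> {(n + j, j) | j. j \<in> Mset m}"

definition EB :: "(nat \<times> nat) set \<Rightarrow> nat set \<Rightarrow> (nat \<times> nat) set" where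
  "EB E S = {e \<in> E. fst e \<in> S}"

definition ES :: "(nat \<times> nat) set \<Rightarrow> nat \<Rightarrow> (nat \<times> nat) set" where
  "ES E j = {e \<in> E. snd e = j}"

definition fext :: "nat \<Rightarrow> (nat \<times> nat) set \<Rightarrow> (nat \<Rightarrow> (nat \<times> nat) set \<Rightarrow> real)
    \<Rightarrow> nat \<Rightarrow> (nat \<times> nat) set \<Rightarrow> real" where
  "fext n E0 f j F = (if (n + j, j) \<in> F then f j (ES E0 j) else f j F)"

definition ftot :: "nat \<Rightarrow> nat \<Rightarrow> (nat \<times> nat) set \<Rightarrow> (nat \<Rightarrow> (nat \<times> nat) set \<Rightarrow> real)
    \<Rightarrow> (nat \<times> nat) set \<Rightarrow> real" where
  "ftot n m E0 f F = (\<Sum>j\<in>Mset m. fext n E0 f j (F \<inter> ES (Eall n m E0) j))"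

definition inPj :: "nat \<Rightarrow> nat \<Rightarrow> (nat \<times> nat) set \<Rightarrow> (nat \<Rightarrow> (nat \<times> nat) set \<Rightarrow> real)
    \<Rightarrow> nat \<Rightarrow> (nat \<times> nat \<Rightarrow> real) \<Rightarrow> bool" where
  "inPj n m E0 f j y \<longleftrightarrow>
     (\<forall>e\<in>ES (Eall n m E0) j. 0 \<le> y e) \<and>
     (\<forall>F. F \<subseteq> ES (Eall n m E0) j \<longrightarrow> sum y F \<le> fext n E0 f j F)"

definition inP :: "nat \<Rightarrow> nat \<Rightarrow> (nat \<times> nat) set \<Rightarrow> (nat \<Rightarrow> (nat \<times> nat) set \<Rightarrow> real)
    \<Rightarrow> (nat \<times> nat \<Rightarrow> real) \<Rightarrow> bool" where
  "inP n m E0 f w \<longleftrightarrow>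
     (\<forall>e\<in>Eall n m E0. 0 \<le> w e) \<and> (\<forall>e. e \<notin> Eall n m E0 \<longrightarrow> w e = 0) \<and>
     (\<forall>j\<in>Mset m. inPj n m E0 f j w)"

definition Pwd :: "nat \<Rightarrow> nat \<Rightarrow> (nat \<times> nat) set \<Rightarrow> (nat \<Rightarrow> (nat \<times> nat) set \<Rightarrow> real)
    \<Rightarrow> (nat \<times> nat \<Rightarrow> real) \<Rightarrow> (nat \<Rightarrow> ereal) \<Rightarrow> (nat \<times> nat \<Rightarrow> real) set" where
  "Pwd n m E0 f w d =
     {y. (\<forall>e\<in>Eall n m E0. 0 \<le> y e) \<and> (\<forall>e. e \<notin> Eall n m E0 \<longrightarrow> y e = 0) \<and>
         inP n m E0 f (\<lambda>e. w e + y e) \<and>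
         (\<forall>k\<in>Nset n m. ereal (sum y (EB (Eall n m E0) {k})) \<le> d k)}"

definition Pi_wd :: "nat \<Rightarrow> nat \<Rightarrow> (nat \<times> nat) set \<Rightarrow> (nat \<Rightarrow> (nat \<times> nat) set \<Rightarrow> real)
    \<Rightarrow> (nat \<times> nat \<Rightarrow> real) \<Rightarrow> (nat \<Rightarrow> ereal) \<Rightarrow> nat \<Rightarrow> (nat \<times> nat \<Rightarrow> real)
    \<Rightarrow> (nat \<Rightarrow> real) set" where
  "Pi_wd n m E0 f w d i xi =
     {u. (\<forall>k. k \<notin> Nset n m - {i} \<longrightarrow> u k = 0) \<and>
         (\<exists>y\<in>Pwd n m E0 f w d.
            (\<forall>e\<in>EB (Eall n m E0) {i}. y e = xi e) \<and>
            (\<forall>k\<in>Nset n m - {i}. u k = sum y (EB (Eall n m E0) {k})))}"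

definition gfun :: "nat \<Rightarrow> nat \<Rightarrow> (nat \<times> nat) set \<Rightarrow> (nat \<Rightarrow> (nat \<times> nat) set \<Rightarrow> real)
    \<Rightarrow> (nat \<Rightarrow> real) \<Rightarrow> (nat \<Rightarrow> ereal) \<Rightarrow> nat set \<Rightarrow> ereal" where
  "gfun n m E0 f x d S =
     Min {Min {ereal (ftot n m E0 f (EB (Eall n m E0) S'') - sum x S'') | S''.
                 S' \<subseteq> S'' \<and> S'' \<subseteq> Nset n m}
          + sum d (S - S') | S'. S' \<subseteq> S}"

definition Bext :: "nat \<Rightarrow> (nat \<Rightarrow> real) \<Rightarrow> nat \<Rightarrow> ereal" where
  "Bext n B k = (if k \<le> n then ereal (B k) else \<infinity>)"

definition dem :: "(nat \<Rightarrow> ereal) \<Rightarrow> (nat \<Rightarrow> real) \<Rightarrow> (nat \<Rightarrow> real) \<Rightarrow> (nat \<Rightarrow> real)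
    \<Rightarrow> nat \<Rightarrow> ereal" where
  "dem BB v p c k =
     (if c k = 0 then \<infinity> else if c k < v k then (BB k - ereal (p k)) / ereal (c k) else 0)"

record pca_state =
  sw :: "nat \<times> nat \<Rightarrow> real"
  sp :: "nat \<Rightarrow> real"
  sr :: "nat \<Rightarrow> real"
  sc :: "nat \<Rightarrow> real"
  sd :: "nat \<Rightarrow> ereal"
  sl :: nat

definition pca_init :: pca_state where
  "pca_init = \<lparr>sw = (\<lambda>_. 0), sp = (\<lambda>_. 0), sr = (\<lambda>_. 0), sc = (\<lambda>_. 0),
                sd = (\<lambda>_. \<infinity>), sl = 1\<rparr>"

definition admissible_xi :: "nat \<Rightarrow> nat \<Rightarrow> (nat \<times> nat) set \<Rightarrow> (nat \<Rightarrow> (nat \<times> nat) set \<Rightarrow> real)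
    \<Rightarrow> (nat \<times> nat \<Rightarrow> real) \<Rightarrow> (nat \<Rightarrow> ereal) \<Rightarrow> nat \<Rightarrow> (nat \<times> nat \<Rightarrow> real) \<Rightarrow> bool" where
  "admissible_xi n m E0 f w d i xi \<longleftrightarrow>
     (\<forall>e\<in>EB (Eall n m E0) {i}. 0 \<le> xi e) \<and>
     (\<forall>e. e \<notin> EB (Eall n m E0) {i} \<longrightarrow> xi e = 0) \<and>
     Pi_wd n m E0 f w d i xi = Pi_wd n m E0 f w d i (\<lambda>_. 0)"

definition maximal_xi :: "nat \<Rightarrow> nat \<Rightarrow> (nat \<times> nat) set \<Rightarrow> (nat \<Rightarrow> (nat \<times> nat) set \<Rightarrow> real)
    \<Rightarrow> (nat \<times> nat \<Rightarrow> real) \<Rightarrow> (nat \<Rightarrow> ereal) \<Rightarrow> nat \<Rightarrow> (nat \<times> nat \<Rightarrow> real) \<Rightarrow> bool" where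
  "maximal_xi n m E0 f w d i xi \<longleftrightarrow>
     admissible_xi n m E0 f w d i xi \<and>
     (\<forall>xi'. admissible_xi n m E0 f w d i xi' \<and> (\<forall>e. xi e \<le> xi' e) \<longrightarrow> xi' = xi)"

definition clinch_one :: "nat \<Rightarrow> nat \<Rightarrow> (nat \<times> nat) set \<Rightarrow> (nat \<Rightarrow> (nat \<times> nat) set \<Rightarrow> real)
    \<Rightarrow> (nat \<Rightarrow> real) \<Rightarrow> (nat \<Rightarrow> real) \<Rightarrow> nat \<Rightarrow> pca_state \<Rightarrow> pca_state \<Rightarrow> bool" where
  "clinch_one n m E0 f B v i s s' \<longleftrightarrow>
     (\<exists>xi. maximal_xi n m E0 f (sw s) (sd s) i xi \<and>
        (let p' = (sp s)(i := sp s i + sc s i * sum xi (EB (Eall n m E0) {i}))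
         in s' = s\<lparr>sw := (\<lambda>e. sw s e + xi e),
                   sp := p',
                   sd := (\<lambda>k. dem (Bext n B) v p' (sc s) k),
                   sr := (\<lambda>j. sr s j + sc s i * xi (i, j))\<rparr>))"

inductive clinch_from :: "nat \<Rightarrow> nat \<Rightarrow> (nat \<times> nat) set \<Rightarrow> (nat \<Rightarrow> (nat \<times> nat) set \<Rightarrow> real)
    \<Rightarrow> (nat \<Rightarrow> real) \<Rightarrow> (nat \<Rightarrow> real) \<Rightarrow> nat \<Rightarrow> pca_state \<Rightarrow> pca_state \<Rightarrow> bool"
  for n m E0 f B v where
  cf_done: "n + m < k \<Longrightarrow> clinch_from n m E0 f B v k s s"
| cf_next: "k \<le> n + m \<Longrightarrow> clinch_one n m E0 f B v k s s' \<Longrightarrow>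
         clinch_from n m E0 f B v (Suc k) s' s'' \<Longrightarrow> clinch_from n m E0 f B v k s s''"

definition pca_iter :: "nat \<Rightarrow> nat \<Rightarrow> (nat \<times> nat) set \<Rightarrow> (nat \<Rightarrow> (nat \<times> nat) set \<Rightarrow> real)
    \<Rightarrow> (nat \<Rightarrow> real) \<Rightarrow> (nat \<Rightarrow> real) \<Rightarrow> real \<Rightarrow> pca_state \<Rightarrow> pca_state \<Rightarrow> bool" where
  "pca_iter n m E0 f B v \<epsilon> s s'' \<longleftrightarrow>
     (\<exists>s1. clinch_from n m E0 f B v 1 s s1 \<and>
        (let l = sl s1; c' = (sc s1)(l := sc s1 l + \<epsilon>)
         in s'' = s1\<lparr>sc := c',
                     sd := (sd s1)(l := dem (Bext n B) v (sp s1) c' l),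
                     sl := (if l \<ge> n + m then 1 else l + 1)\<rparr>))"

text \<open>States at the start of iterations (just before a clinching step), reachable
  from the initial state, each iteration being executed only while some d_i \<noteq> 0.\<close>
inductive pca_reach :: "nat \<Rightarrow> nat \<Rightarrow> (nat \<times> nat) set \<Rightarrow> (nat \<Rightarrow> (nat \<times> nat) set \<Rightarrow> real)
    \<Rightarrow> (nat \<Rightarrow> real) \<Rightarrow> (nat \<Rightarrow> real) \<Rightarrow> real \<Rightarrow> pca_state \<Rightarrow> bool"
  for n m E0 f B v \<epsilon> where
  init: "pca_reach n m E0 f B v \<epsilon> pca_init"
| step: "pca_reach n m E0 f B v \<epsilon> s \<Longrightarrow> (\<exists>k\<in>Nset n m. sd s k \<noteq> 0) \<Longrightarrow>
         pca_iter n m E0 f B v \<epsilon> s s' \<Longrightarrow> pca_reach n m E0 f B v \<epsilon> s'"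

end

theory Submission
  imports Defs
begin



lemma greedy:
  fixes \<sigma> :: "'a set \<Rightarrow> real"
  assumes "finite X"
    and "\<sigma> {} = 0"
    and "\<forall>A B. A \<subseteq> B \<and> B \<subseteq> X \<longrightarrow> \<sigma> A \<le> \<sigma> B"
    and "\<forall>A B. A \<subseteq> X \<and> B \<subseteq> X \<longrightarrow> \<sigma> (A \<union> B) + \<sigma> (A \<inter> B) \<le> \<sigma> A + \<sigma> B"
  shows "\<exists>z. (\<forall>e. 0 \<le> z e) \<and> (\<forall>e. e \<notin> X \<longrightarrow> z e = 0) \<and>
             (\<forall>A. A \<subseteq> X \<longrightarrow> sum z A \<le> \<sigma> A) \<and> sum z X = \<sigma> X"
  using assms
proof (induction X rule: finite_induct)
  case empty
  then show ?case by (intro exI[of _ "\<lambda>_. 0"]) auto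
next
  case (insert a X0)
  have h3: "\<forall>A B. A \<subseteq> B \<and> B \<subseteq> X0 \<longrightarrow> \<sigma> A \<le> \<sigma> B"
  proof (intro allI impI)
    fix A B assume "A \<subseteq> B \<and> B \<subseteq> X0"
    then have "A \<subseteq> B \<and> B \<subseteq> insert a X0" by auto
    then show "\<sigma> A \<le> \<sigma> B" using insert.prems(2)[rule_format, of A B] by simp
  qed
  have h4: "\<forall>A B. A \<subseteq> X0 \<and> B \<subseteq> X0 \<longrightarrow> \<sigma> (A \<union> B) + \<sigma> (A \<inter> B) \<le> \<sigma> A + \<sigma> B"
  proof (intro allI impI)
    fix A B assume "A \<subseteq> X0 \<and> B \<subseteq> X0"
    then have "A \<subseteq> insert a X0 \<and> B \<subseteq> insert a X0" by auto
    then show "\<sigma> (A \<union> B) + \<sigma> (A \<inter> B) \<le> \<sigma> A + \<sigma> B" using insert.prems(3)[rule_format, of A B] by simp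
  qed
  from insert.IH[OF insert.prems(1) h3 h4] obtain z0 where
    z0: "\<forall>e. 0 \<le> z0 e" "\<forall>e. e \<notin> X0 \<longrightarrow> z0 e = 0" "\<forall>A. A \<subseteq> X0 \<longrightarrow> sum z0 A \<le> \<sigma> A" "sum z0 X0 = \<sigma> X0"
    by blast
  define z where "z = z0(a := \<sigma> (insert a X0) - \<sigma> X0)"
  have za: "0 \<le> z a" using insert.prems(2)[rule_format, of X0 "insert a X0"] by (auto simp: z_def)
  have "\<forall>e. 0 \<le> z e" using za z0 by (auto simp: z_def)
  moreover have "\<forall>e. e \<notin> insert a X0 \<longrightarrow> z e = 0" using z0 by (auto simp: z_def)
  moreover have "\<forall>A. A \<subseteq> insert a X0 \<longrightarrow> sum z A \<le> \<sigma> A"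
  proof (intro allI impI)
    fix A assume A: "A \<subseteq> insert a X0"
    show "sum z A \<le> \<sigma> A"
    proof (cases "a \<in> A")
      case False
      then have "A \<subseteq> X0" using A by blast
      moreover have "sum z A = sum z0 A" using False by (intro sum.cong) (auto simp: z_def)
      ultimately show ?thesis using z0 by simp
    next
      case True
      have fA: "finite A" using A insert.hyps(1) finite_subset by blast
      have "sum z A = z a + sum z (A - {a})" using True fA by (simp add: sum.remove)
      also have "sum z (A - {a}) = sum z0 (A - {a})" by (intro sum.cong) (auto simp: z_def)
      also have "\<dots> \<le> \<sigma> (A - {a})" using z0(3) A by (metis Diff_subset_conv insert_is_Un)
      finally have 1: "sum z A \<le> \<sigma> (insert a X0) - \<sigma> X0 + \<sigma> (A - {a})" by (simp add: z_def)
      have "A \<union> X0 = insert a X0" "A \<inter> X0 = A - {a}" using A True insert.hyps(2) by auto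
      then have "\<sigma> (insert a X0) + \<sigma> (A - {a}) \<le> \<sigma> A + \<sigma> X0"
        using insert.prems(3)[rule_format, of A X0] A by auto
      then show ?thesis using 1 by linarith
    qed
  qed
  moreover have "sum z (insert a X0) = \<sigma> (insert a X0)"
  proof -
    have "sum z (insert a X0) = z a + sum z X0" using insert.hyps by simp
    also have "sum z X0 = sum z0 X0" using insert.hyps(2) by (intro sum.cong) (auto simp: z_def)
    finally show ?thesis using z0 by (simp add: z_def)
  qed
  ultimately show ?case by blast
qed

lemma EB_mono: "T \<subseteq> T' \<Longrightarrow> EB E T \<subseteq> EB E T'"
  by (auto simp: EB_def)

lemma EB_sub: "EB E T \<subseteq> E"
  by (auto simp: EB_def)

lemma EB_insert: "EB E (insert k T) = EB E {k} \<union> EB E T"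
  by (auto simp: EB_def)

lemma EB_disj: "k \<notin> T \<Longrightarrow> EB E {k} \<inter> EB E T = {}"
  by (auto simp: EB_def)

lemma hall:
  fixes r :: "(nat \<times> nat) set \<Rightarrow> real" and w :: "nat \<times> nat \<Rightarrow> real" and u :: "nat \<Rightarrow> real"
  assumes fE: "finite E" and fR: "finite R"
    and r_mono: "\<forall>F G. F \<subseteq> G \<and> G \<subseteq> E \<longrightarrow> r F \<le> r G"
    and r_sub: "\<forall>F G. F \<subseteq> E \<and> G \<subseteq> E \<longrightarrow> r (F \<union> G) + r (F \<inter> G) \<le> r F + r G"
    and r_empty: "r {} = 0"
    and u_nn: "\<forall>k\<in>R. 0 \<le> u k"
    and hc: "\<forall>T F. T \<subseteq> R \<and> F \<subseteq> E \<and> EB E T \<subseteq> F \<longrightarrow> sum u T + sum w F \<le> r F"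
  shows "\<exists>y. (\<forall>e. 0 \<le> y e) \<and> (\<forall>e. e \<notin> EB E R \<longrightarrow> y e = 0) \<and>
             (\<forall>F. F \<subseteq> E \<longrightarrow> sum w F + sum y F \<le> r F) \<and> (\<forall>k\<in>R. sum y (EB E {k}) = u k)"
  using fR u_nn hc
proof (induction R arbitrary: w rule: finite_induct)
  case empty
  show ?case
  proof (intro exI[of _ "\<lambda>_. 0"] conjI allI impI)
    fix F assume "F \<subseteq> E"
    then show "sum w F + sum (\<lambda>_. 0) F \<le> r F"
      using empty.prems(2)[rule_format, of "{}" F] by (simp add: EB_def)
  qed auto
next
  case (insert k R0)
  define X where "X = EB E {k}"
  have fX: "finite X" using fE by (simp add: X_def EB_def)
  define Q where "Q H = {(T, F). T \<subseteq> R0 \<and> F \<subseteq> E \<and> EB E T \<union> H \<subseteq> F}" for H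
  define \<phi> where "\<phi> = (\<lambda>(T, F). r F - sum w F - sum u T)"
  define \<sigma> where "\<sigma> H = Min (\<phi> ` Q H)" for H
  have fQ: "finite (Q H)" for H
  proof -
    have "Q H \<subseteq> Pow R0 \<times> Pow E" by (auto simp: Q_def)
    then show ?thesis using insert.hyps(1) fE finite_subset by blast
  qed
  have neQ: "({}, E) \<in> Q H" if "H \<subseteq> E" for H using that by (auto simp: Q_def EB_def)
  have \<sigma>_le: "\<sigma> H \<le> \<phi> (T, F)" if "(T, F) \<in> Q H" for H T F
    unfolding \<sigma>_def using that fQ by (intro Min_le) auto
  have \<sigma>_att: "\<exists>T F. (T, F) \<in> Q H \<and> \<sigma> H = \<phi> (T, F)" if "H \<subseteq> E" for H
  proof -
    have "\<sigma> H \<in> \<phi> ` Q H" unfolding \<sigma>_def using fQ neQ[OF that] by (intro Min_in) auto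
    then show ?thesis by auto
  qed
  have \<phi>_nn: "0 \<le> \<phi> (T, F)" if "(T, F) \<in> Q H" for H T F
  proof -
    have "T \<subseteq> insert k R0" "F \<subseteq> E" "EB E T \<subseteq> F" using that by (auto simp: Q_def)
    then have "sum u T + sum w F \<le> r F" using insert.prems(2) by blast
    then show ?thesis by (simp add: \<phi>_def)
  qed
  have \<sigma>_nn: "0 \<le> \<sigma> H" if "H \<subseteq> E" for H
    using \<sigma>_att[OF that] \<phi>_nn by auto
  have \<sigma>0: "\<sigma> {} = 0"
  proof -
    have "({}, {}) \<in> Q {}" by (auto simp: Q_def EB_def)
    then have "\<sigma> {} \<le> \<phi> ({}, {})" by (rule \<sigma>_le)
    then show ?thesis using \<sigma>_nn[of "{}"] r_empty by (simp add: \<phi>_def)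
  qed
  have XE: "X \<subseteq> E" by (simp add: X_def EB_sub)
  have \<sigma>_mono: "\<forall>A B. A \<subseteq> B \<and> B \<subseteq> X \<longrightarrow> \<sigma> A \<le> \<sigma> B"
  proof (intro allI impI)
    fix A B assume AB: "A \<subseteq> B \<and> B \<subseteq> X"
    then have BE: "B \<subseteq> E" using XE by blast
    obtain T F where TF: "(T, F) \<in> Q B" "\<sigma> B = \<phi> (T, F)" using \<sigma>_att[OF BE] by blast
    have "(T, F) \<in> Q A" using TF(1) AB unfolding Q_def by blast
    then have "\<sigma> A \<le> \<phi> (T, F)" by (rule \<sigma>_le)
    then show "\<sigma> A \<le> \<sigma> B" using TF(2) by simp
  qed
  have \<sigma>_sub: "\<forall>A B. A \<subseteq> X \<and> B \<subseteq> X \<longrightarrow> \<sigma> (A \<union> B) + \<sigma> (A \<inter> B) \<le> \<sigma> A + \<sigma> B"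
  proof (intro allI impI)
    fix A B assume AB: "A \<subseteq> X \<and> B \<subseteq> X"
    have AE: "A \<subseteq> E" "B \<subseteq> E" using AB XE by blast+
    obtain T1 F1 where 1: "(T1, F1) \<in> Q A" "\<sigma> A = \<phi> (T1, F1)" using \<sigma>_att[OF AE(1)] by blast
    obtain T2 F2 where 2: "(T2, F2) \<in> Q B" "\<sigma> B = \<phi> (T2, F2)" using \<sigma>_att[OF AE(2)] by blast
    have i1: "T1 \<subseteq> R0" "F1 \<subseteq> E" "EB E T1 \<union> A \<subseteq> F1" using 1(1) unfolding Q_def by blast+
    have i2: "T2 \<subseteq> R0" "F2 \<subseteq> E" "EB E T2 \<union> B \<subseteq> F2" using 2(1) unfolding Q_def by blast+
    have "EB E (T1 \<union> T2) \<union> (A \<union> B) \<subseteq> F1 \<union> F2" using i1(3) i2(3) unfolding EB_def by blast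
    then have q1: "(T1 \<union> T2, F1 \<union> F2) \<in> Q (A \<union> B)" using i1 i2 unfolding Q_def by blast
    have "EB E (T1 \<inter> T2) \<union> (A \<inter> B) \<subseteq> F1 \<inter> F2" using i1(3) i2(3) unfolding EB_def by blast
    then have q2: "(T1 \<inter> T2, F1 \<inter> F2) \<in> Q (A \<inter> B)" using i1 i2 unfolding Q_def by blast
    have F12: "F1 \<subseteq> E" "F2 \<subseteq> E" "T1 \<subseteq> R0" "T2 \<subseteq> R0" using i1 i2 by blast+
    have fF: "finite F1" "finite F2" using F12 fE by (meson finite_subset)+
    have fT: "finite T1" "finite T2" using F12 insert.hyps(1) by (meson finite_subset)+
    have "r (F1 \<union> F2) + r (F1 \<inter> F2) \<le> r F1 + r F2" using r_sub F12 by blast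
    moreover have "sum w (F1 \<union> F2) + sum w (F1 \<inter> F2) = sum w F1 + sum w F2"
      using fF by (rule sum.union_inter)
    moreover have "sum u (T1 \<union> T2) + sum u (T1 \<inter> T2) = sum u T1 + sum u T2"
      using fT by (rule sum.union_inter)
    ultimately have "\<phi> (T1 \<union> T2, F1 \<union> F2) + \<phi> (T1 \<inter> T2, F1 \<inter> F2) \<le> \<phi> (T1, F1) + \<phi> (T2, F2)"
      by (simp add: \<phi>_def)
    then show "\<sigma> (A \<union> B) + \<sigma> (A \<inter> B) \<le> \<sigma> A + \<sigma> B"
      using \<sigma>_le[OF q1] \<sigma>_le[OF q2] 1 2 by linarith
  qed
  obtain z where z: "\<forall>e. 0 \<le> z e" "\<forall>e. e \<notin> X \<longrightarrow> z e = 0"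
      "\<forall>A. A \<subseteq> X \<longrightarrow> sum z A \<le> \<sigma> A" "sum z X = \<sigma> X"
    using greedy[OF fX \<sigma>0 \<sigma>_mono \<sigma>_sub] by blast
  have \<sigma>X: "u k \<le> \<sigma> X"
  proof -
    obtain T F where TF: "(T, F) \<in> Q X" "\<sigma> X = \<phi> (T, F)" using \<sigma>_att XE by blast
    have T: "T \<subseteq> R0" "F \<subseteq> E" "EB E T \<union> X \<subseteq> F" using TF by (auto simp: Q_def)
    have "insert k T \<subseteq> insert k R0" using T by auto
    moreover have "EB E (insert k T) \<subseteq> F" using T unfolding EB_insert[of E k T] X_def by blast
    ultimately have "sum u (insert k T) + sum w F \<le> r F" using insert.prems(2) T by blast
    moreover have "k \<notin> T" using T insert.hyps(2) by auto
    moreover have "finite T" using T(1) insert.hyps(1) by (rule finite_subset)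
    ultimately show ?thesis using TF by (simp add: \<phi>_def)
  qed
  have uk: "0 \<le> u k" using insert.prems(1) by auto
  define t where "t = (if \<sigma> X = 0 then 0 else u k / \<sigma> X)"
  have t01: "0 \<le> t" "t \<le> 1" using \<sigma>X uk by (auto simp: t_def)
  have tX: "t * \<sigma> X = u k" using \<sigma>X uk by (auto simp: t_def)
  define z' where "z' e = t * z e" for e
  have z'nn: "\<forall>e. 0 \<le> z' e" using z(1) t01 by (simp add: z'_def)
  have z'0: "\<forall>e. e \<notin> X \<longrightarrow> z' e = 0" using z(2) by (simp add: z'_def)
  have z'X: "sum z' X = u k" using z(4) tX by (simp add: z'_def sum_distrib_left[symmetric])
  have z'le: "sum z' A \<le> \<sigma> A" if "A \<subseteq> X" for A
  proof -
    have "sum z' A = t * sum z A" by (simp add: z'_def sum_distrib_left)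
    also have "\<dots> \<le> sum z A"
    proof -
      have "0 \<le> sum z A" using z(1) by (intro sum_nonneg) blast
      then show ?thesis using t01 by (simp add: mult_left_le_one_le)
    qed
    also have "\<dots> \<le> \<sigma> A" using z(3) that by blast
    finally show ?thesis .
  qed
  define w1 where "w1 e = w e + z' e" for e
  have fin_sub: "finite F" if "F \<subseteq> E" for F using that fE by (rule finite_subset)
  have z'F: "sum z' F = sum z' (F \<inter> X)" if "F \<subseteq> E" for F
    using fin_sub[OF that] z'0 by (intro sum.mono_neutral_right) auto
  have hc1: "\<forall>T F. T \<subseteq> R0 \<and> F \<subseteq> E \<and> EB E T \<subseteq> F \<longrightarrow> sum u T + sum w1 F \<le> r F"
  proof (intro allI impI)
    fix T F assume TF: "T \<subseteq> R0 \<and> F \<subseteq> E \<and> EB E T \<subseteq> F"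
    then have "(T, F) \<in> Q (F \<inter> X)" by (auto simp: Q_def)
    then have "\<sigma> (F \<inter> X) \<le> r F - sum w F - sum u T" using \<sigma>_le by (simp add: \<phi>_def)
    moreover have "sum z' F \<le> \<sigma> (F \<inter> X)" using z'F TF z'le by auto
    moreover have "sum w1 F = sum w F + sum z' F" by (simp add: w1_def sum.distrib)
    ultimately show "sum u T + sum w1 F \<le> r F" by linarith
  qed
  have unn0: "\<forall>k\<in>R0. 0 \<le> u k" using insert.prems(1) by auto
  obtain y1 where y1: "\<forall>e. 0 \<le> y1 e" "\<forall>e. e \<notin> EB E R0 \<longrightarrow> y1 e = 0"
      "\<forall>F. F \<subseteq> E \<longrightarrow> sum w1 F + sum y1 F \<le> r F" "\<forall>l\<in>R0. sum y1 (EB E {l}) = u l"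
    using insert.IH[OF unn0 hc1] by blast
  define y where "y e = z' e + y1 e" for e
  show ?case
  proof (intro exI[of _ y] conjI allI impI ballI)
    fix e show "0 \<le> y e" using z'nn y1(1) unfolding y_def by (meson add_nonneg_nonneg)
  next
    fix e assume "e \<notin> EB E (insert k R0)"
    then have "e \<notin> X" "e \<notin> EB E R0" by (auto simp: X_def EB_def)
    then show "y e = 0" unfolding y_def using z'0 y1(2) by (metis add_0)
  next
    fix F assume F: "F \<subseteq> E"
    have "sum w F + sum y F = sum w1 F + sum y1 F" by (simp add: y_def w1_def sum.distrib)
    then show "sum w F + sum y F \<le> r F" using y1(3) F by simp
  next
    fix l assume l: "l \<in> insert k R0"
    have fl: "finite (EB E {l})" using fin_sub EB_sub by blast
    have "sum y (EB E {l}) = sum z' (EB E {l}) + sum y1 (EB E {l})" by (simp add: y_def sum.distrib)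
    show "sum y (EB E {l}) = u l"
    proof (cases "l = k")
      case True
      have "sum y1 X = 0" using y1(2) EB_disj[OF insert.hyps(2), of E] by (intro sum.neutral) (auto simp: X_def)
      then show ?thesis using True z'X by (simp add: y_def sum.distrib X_def)
    next
      case False
      then have l0: "l \<in> R0" using l by auto
      have "sum z' (EB E {l}) = 0" using z'0 False by (intro sum.neutral) (auto simp: X_def EB_def)
      then show ?thesis using y1(4) l0 by (simp add: y_def sum.distrib)
    qed
  qed
qed




definition Gf :: "(nat set \<Rightarrow> real) \<Rightarrow> (nat \<Rightarrow> ereal) \<Rightarrow> nat set \<Rightarrow> ereal" where
  "Gf a d R = Min ((\<lambda>T. ereal (a T) + sum d (R - T)) ` Pow R)"

lemma Gf_le: "finite R \<Longrightarrow> T \<subseteq> R \<Longrightarrow> Gf a d R \<le> ereal (a T) + sum d (R - T)"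
  unfolding Gf_def by (intro Min_le) auto

lemma Gf_att: "finite R \<Longrightarrow> \<exists>T\<subseteq>R. Gf a d R = ereal (a T) + sum d (R - T)"
proof -
  assume "finite R"
  then have "Gf a d R \<in> (\<lambda>T. ereal (a T) + sum d (R - T)) ` Pow R"
    unfolding Gf_def by (intro Min_in) auto
  then show ?thesis by auto
qed

lemma Gf_fin:
  assumes "finite R" "\<forall>k\<in>R. 0 \<le> d k"
  shows "Gf a d R = ereal (real_of_ereal (Gf a d R))"
proof -
  obtain T where T: "T \<subseteq> R" "Gf a d R = ereal (a T) + sum d (R - T)" using Gf_att[OF assms(1)] by blast
  have "0 \<le> sum d (R - T)" using assms(2) by (intro sum_nonneg) auto
  then have lo: "ereal (a T) \<le> Gf a d R" using T(2) by (metis add.right_neutral add_left_mono)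
  have hi: "Gf a d R \<le> ereal (a R)" using Gf_le[OF assms(1), of R] by simp
  have "\<bar>Gf a d R\<bar> \<noteq> \<infinity>" using lo hi by auto
  then show ?thesis by (simp add: ereal_real)
qed

lemma Gf_ext:
  assumes "finite B" "A \<subseteq> B"
  shows "Gf a d B \<le> Gf a d A + sum d (B - A)"
proof -
  have fA: "finite A" using assms finite_subset by auto
  obtain T where T: "T \<subseteq> A" "Gf a d A = ereal (a T) + sum d (A - T)" using Gf_att[OF fA] by blast
  have "B - T = (A - T) \<union> (B - A)" using T assms by auto
  moreover have "sum d ((A - T) \<union> (B - A)) = sum d (A - T) + sum d (B - A)"
    by (rule sum.union_disjoint) (use fA assms in auto)
  ultimately have "sum d (B - T) = sum d (A - T) + sum d (B - A)" by simp
  moreover have "Gf a d B \<le> ereal (a T) + sum d (B - T)"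
    using Gf_le[OF assms(1)] T assms by blast
  ultimately have "Gf a d B \<le> ereal (a T) + (sum d (A - T) + sum d (B - A))" by simp
  then show ?thesis using T by (simp add: add.assoc)
qed

lemma ereal_rearr: "ereal (x + y) + (p + q) = (ereal x + p) + (ereal y + (q::ereal))"
  by (cases p; cases q) auto

lemma Gf_submod:
  assumes fA: "finite A" and fB: "finite B"
    and asub: "\<forall>T1 T2. T1 \<subseteq> A \<and> T2 \<subseteq> B \<longrightarrow> a (T1 \<union> T2) + a (T1 \<inter> T2) \<le> a T1 + a T2"
  shows "Gf a d (A \<union> B) + Gf a d (A \<inter> B) \<le> Gf a d A + Gf a d B"
proof -
  obtain T1 where T1: "T1 \<subseteq> A" "Gf a d A = ereal (a T1) + sum d (A - T1)" using Gf_att[OF fA] by blast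
  obtain T2 where T2: "T2 \<subseteq> B" "Gf a d B = ereal (a T2) + sum d (B - T2)" using Gf_att[OF fB] by blast
  define P where "P = (A \<union> B) - (T1 \<union> T2)"
  define Q where "Q = (A \<inter> B) - (T1 \<inter> T2)"
  define U where "U = A - T1"
  define V where "V = B - T2"
  have e1: "U \<union> V = P \<union> Q" using T1 T2 by (auto simp: P_def Q_def U_def V_def)
  have e2: "U \<inter> V = P \<inter> Q" using T1 T2 by (auto simp: P_def Q_def U_def V_def)
  have fin: "finite P" "finite Q" "finite U" "finite V" using fA fB by (auto simp: P_def Q_def U_def V_def)
  have "sum d P + sum d Q = sum d U + sum d V"
    using sum.union_inter[OF fin(1,2), of d] sum.union_inter[OF fin(3,4), of d] e1 e2 by simp
  have l1: "Gf a d (A \<union> B) \<le> ereal (a (T1 \<union> T2)) + sum d P"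
    unfolding P_def using T1 T2 fA fB by (intro Gf_le) auto
  have l2: "Gf a d (A \<inter> B) \<le> ereal (a (T1 \<inter> T2)) + sum d Q"
    unfolding Q_def using T1 T2 fA by (intro Gf_le) auto
  have "Gf a d (A \<union> B) + Gf a d (A \<inter> B) \<le> (ereal (a (T1 \<union> T2)) + sum d P) + (ereal (a (T1 \<inter> T2)) + sum d Q)"
    using l1 l2 by (rule add_mono)
  also have "\<dots> = ereal (a (T1 \<union> T2) + a (T1 \<inter> T2)) + (sum d P + sum d Q)"
    by (simp add: ac_simps)
  also have "\<dots> \<le> ereal (a T1 + a T2) + (sum d P + sum d Q)"
    using asub T1 T2 by (intro add_right_mono) auto
  also have "\<dots> = Gf a d A + Gf a d B"
    unfolding T1(2) T2(2) \<open>sum d P + sum d Q = sum d U + sum d V\<close> U_def V_def by (rule ereal_rearr)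
  finally show ?thesis .
qed

lemma Gf_dmono:
  assumes "finite R" "\<forall>k\<in>R. d' k \<le> d k"
  shows "Gf a d' R \<le> Gf a d R"
proof -
  obtain T where T: "T \<subseteq> R" "Gf a d R = ereal (a T) + sum d (R - T)" using Gf_att[OF assms(1)] by blast
  have "sum d' (R - T) \<le> sum d (R - T)" using assms(2) by (intro sum_mono) auto
  then have "ereal (a T) + sum d' (R - T) \<le> Gf a d R" using T by (simp add: add_left_mono)
  then show ?thesis using Gf_le[OF assms(1) T(1), of a d'] by simp
qed

lemma Gf_cong:
  assumes "\<forall>T. T \<subseteq> R \<longrightarrow> a' T = a T" "\<forall>k\<in>R. d' k = d k"
  shows "Gf a' d' R = Gf a d R"
proof -
  have "(\<lambda>T. ereal (a' T) + sum d' (R - T)) ` Pow R = (\<lambda>T. ereal (a T) + sum d (R - T)) ` Pow R"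
    using assms by (intro image_cong refl) (auto intro!: sum.cong)
  then show ?thesis by (simp add: Gf_def)
qed

lemma Gf_empty: "Gf a d {} = ereal (a {})"
  by (simp add: Gf_def)

lemma Gf_single: "Gf a d {k} \<le> ereal (a {}) + d k"
  using Gf_le[of "{k}" "{}" a d] by simp




lemma sum_EB:
  assumes "finite E" "finite T"
  shows "sum g (EB E T) = (\<Sum>k\<in>T. sum g (EB E {k}))"
proof -
  have fe: "finite (EB E T)" using assms(1) by (simp add: EB_def)
  have "(\<Sum>k\<in>T. sum g {x \<in> EB E T. fst x = k}) = sum g (EB E T)"
    by (rule sum.group[OF fe assms(2)]) (auto simp: EB_def)
  moreover have "{x \<in> EB E T. fst x = k} = EB E {k}" if "k \<in> T" for k
    using that by (auto simp: EB_def)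
  ultimately show ?thesis by (metis (no_types, lifting) sum.cong)
qed

locale mkt =
  fixes n m :: nat and E0 :: "(nat \<times> nat) set" and f :: "nat \<Rightarrow> (nat \<times> nat) set \<Rightarrow> real"
  assumes E0: "E0 \<subseteq> {1..n} \<times> {1..m}"
    and f_nonneg: "\<forall>j\<in>{1..m}. \<forall>F. F \<subseteq> ES E0 j \<longrightarrow> 0 \<le> f j F"
    and f_empty: "\<forall>j\<in>{1..m}. f j {} = 0"
    and f_mono: "\<forall>j\<in>{1..m}. \<forall>F G. F \<subseteq> G \<and> G \<subseteq> ES E0 j \<longrightarrow> f j F \<le> f j G"
    and f_submod: "\<forall>j\<in>{1..m}. \<forall>F G. F \<subseteq> ES E0 j \<and> G \<subseteq> ES E0 j \<longrightarrow>
                       f j (F \<union> G) + f j (F \<inter> G) \<le> f j F + f j G"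
begin

abbreviation "EA \<equiv> Eall n m E0"
abbreviation "NN \<equiv> Nset n m"
abbreviation "ft \<equiv> ftot n m E0 f"
abbreviation "fx \<equiv> fext n E0 f"

lemma finite_E0: "finite E0"
  using E0 by (rule finite_subset) auto

lemma finite_EA: "finite EA"
proof -
  have "Eall n m E0 = E0 \<union> (\<lambda>j. (n + j, j)) ` Mset m" by (auto simp: Eall_def)
  then show ?thesis using finite_E0 by (simp add: Mset_def)
qed

lemma finite_sub_EA: "F \<subseteq> EA \<Longrightarrow> finite F"
  using finite_EA finite_subset by blast

lemma EA_snd: "e \<in> EA \<Longrightarrow> snd e \<in> Mset m"
  using E0 by (auto simp: Eall_def Mset_def)

lemma virt_E0: "(n + j, j) \<notin> E0"
  using E0 by auto

lemma ES_EA: "j \<in> Mset m \<Longrightarrow> ES EA j = ES E0 j \<union> {(n + j, j)}"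
  by (auto simp: ES_def Eall_def)

lemma ES_E0_sub: "ES E0 j \<subseteq> ES EA j"
  by (auto simp: ES_def Eall_def)

lemma sub_noV: "j \<in> Mset m \<Longrightarrow> F \<subseteq> ES EA j \<Longrightarrow> (n + j, j) \<notin> F \<Longrightarrow> F \<subseteq> ES E0 j"
  using ES_EA by blast

lemma jM: "j \<in> Mset m \<Longrightarrow> j \<in> {1..m}"
  by (simp add: Mset_def)

lemma fmono': "j \<in> {1..m} \<Longrightarrow> F \<subseteq> G \<Longrightarrow> G \<subseteq> ES E0 j \<Longrightarrow> f j F \<le> f j G"
  using f_mono by blast

lemma fsub': "j \<in> {1..m} \<Longrightarrow> F \<subseteq> ES E0 j \<Longrightarrow> G \<subseteq> ES E0 j \<Longrightarrow> f j (F \<union> G) + f j (F \<inter> G) \<le> f j F + f j G"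
  using f_submod by blast

lemma fext_empty: "j \<in> Mset m \<Longrightarrow> fx j {} = 0"
  using f_empty by (simp add: fext_def Mset_def)

lemma fext_nn: "j \<in> Mset m \<Longrightarrow> F \<subseteq> ES EA j \<Longrightarrow> 0 \<le> fx j F"
  using f_nonneg sub_noV[of j F] jM[of j] by (auto simp: fext_def)

lemma fext_mono:
  assumes j: "j \<in> Mset m" and FG: "F \<subseteq> G" "G \<subseteq> ES EA j"
  shows "fx j F \<le> fx j G"
proof (cases "(n + j, j) \<in> G")
  case True
  show ?thesis
  proof (cases "(n + j, j) \<in> F")
    case True with \<open>(n + j, j) \<in> G\<close> show ?thesis by (simp add: fext_def)
  next
    case False
    then have "F \<subseteq> ES E0 j" using sub_noV[OF j] FG by blast
    then have "f j F \<le> f j (ES E0 j)" using fmono'[OF jM[OF j]] by blast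
    then show ?thesis using False True by (simp add: fext_def)
  qed
next
  case False
  then have "(n + j, j) \<notin> F" using FG by blast
  moreover have "G \<subseteq> ES E0 j" using sub_noV[OF j] FG False by blast
  moreover have "f j F \<le> f j G" using fmono'[OF jM[OF j] FG(1)] \<open>G \<subseteq> ES E0 j\<close> .
  ultimately show ?thesis using False by (simp add: fext_def)
qed

lemma fext_sub:
  assumes j: "j \<in> Mset m" and FG: "F \<subseteq> ES EA j" "G \<subseteq> ES EA j"
  shows "fx j (F \<union> G) + fx j (F \<inter> G) \<le> fx j F + fx j G"
proof -
  let ?v = "(n + j, j)"
  have jj: "j \<in> {1..m}" using jM[OF j] .
  consider "?v \<in> F" "?v \<in> G" | "?v \<in> F" "?v \<notin> G" | "?v \<notin> F" "?v \<in> G" | "?v \<notin> F" "?v \<notin> G" by blast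
  then show ?thesis
  proof cases
    case 1 then show ?thesis by (simp add: fext_def)
  next
    case 2
    then have "G \<subseteq> ES E0 j" using sub_noV[OF j] FG by blast
    then have "f j (F \<inter> G) \<le> f j G" using fmono'[OF jj, of "F \<inter> G" G] by blast
    then show ?thesis using 2 by (simp add: fext_def)
  next
    case 3
    then have "F \<subseteq> ES E0 j" using sub_noV[OF j] FG by blast
    then have "f j (F \<inter> G) \<le> f j F" using fmono'[OF jj, of "F \<inter> G" F] by blast
    then show ?thesis using 3 by (simp add: fext_def)
  next
    case 4
    then have "F \<subseteq> ES E0 j" "G \<subseteq> ES E0 j" using sub_noV[OF j] FG by blast+
    then show ?thesis using 4 fsub'[OF jj] by (simp add: fext_def)
  qed
qed

lemma ftot_def': "ft F = (\<Sum>j\<in>Mset m. fx j (F \<inter> ES EA j))"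
  by (simp add: ftot_def)

lemma ftot_mono: "F \<subseteq> G \<Longrightarrow> G \<subseteq> EA \<Longrightarrow> ft F \<le> ft G"
  unfolding ftot_def' by (intro sum_mono fext_mono) auto

lemma ftot_sub: "F \<subseteq> EA \<Longrightarrow> G \<subseteq> EA \<Longrightarrow> ft (F \<union> G) + ft (F \<inter> G) \<le> ft F + ft G"
proof -
  have "ft (F \<union> G) + ft (F \<inter> G) = (\<Sum>j\<in>Mset m. fx j (F \<inter> ES EA j \<union> G \<inter> ES EA j) + fx j ((F \<inter> ES EA j) \<inter> (G \<inter> ES EA j)))"
    unfolding ftot_def' sum.distrib[symmetric] by (intro sum.cong refl arg_cong2[where f="(+)"] arg_cong[where f="fx _"]) auto
  also have "\<dots> \<le> (\<Sum>j\<in>Mset m. fx j (F \<inter> ES EA j) + fx j (G \<inter> ES EA j))"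
    by (intro sum_mono fext_sub) auto
  also have "\<dots> = ft F + ft G" unfolding ftot_def' by (simp add: sum.distrib)
  finally show "ft (F \<union> G) + ft (F \<inter> G) \<le> ft F + ft G" .
qed

lemma ftot_empty: "ft {} = 0"
  unfolding ftot_def' by (simp add: fext_empty)

lemma ftot_single:
  assumes j: "j \<in> Mset m" and F: "F \<subseteq> ES EA j"
  shows "ft F = fx j F"
proof -
  have "ft F = fx j (F \<inter> ES EA j) + (\<Sum>j'\<in>Mset m - {j}. fx j' (F \<inter> ES EA j'))"
    unfolding ftot_def' by (rule sum.remove[of "Mset m" j "\<lambda>j. fx j (F \<inter> ES EA j)"]) (use j in \<open>auto simp: Mset_def\<close>)
  moreover have "F \<inter> ES EA j' = {}" if "j' \<noteq> j" for j' using F that by (auto simp: ES_def)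
  ultimately show ?thesis using F fext_empty by (simp add: Int_absorb2)
qed

lemma sum_split:
  assumes "F \<subseteq> EA"
  shows "sum g F = (\<Sum>j\<in>Mset m. sum g (F \<inter> ES EA j))"
proof -
  have fF: "finite F" using assms by (rule finite_sub_EA)
  have "(\<Sum>j\<in>Mset m. sum g {x \<in> F. snd x = j}) = sum g F"
    by (rule sum.group[OF fF]) (use assms EA_snd in \<open>auto simp: Mset_def\<close>)
  moreover have "{x \<in> F. snd x = j} = F \<inter> ES EA j" for j using assms by (auto simp: ES_def)
  ultimately show ?thesis by simp
qed

lemma inP_ub:
  assumes "inP n m E0 f w" "F \<subseteq> EA"
  shows "sum w F \<le> ft F"
proof -
  have "sum w F = (\<Sum>j\<in>Mset m. sum w (F \<inter> ES EA j))" using assms(2) by (rule sum_split)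
  also have "\<dots> \<le> (\<Sum>j\<in>Mset m. fx j (F \<inter> ES EA j))"
    using assms(1) by (intro sum_mono) (auto simp: inP_def inPj_def)
  finally show ?thesis by (simp add: ftot_def')
qed

lemma inP_intro:
  assumes "\<forall>e\<in>EA. 0 \<le> w e" "\<forall>e. e \<notin> EA \<longrightarrow> w e = 0" "\<forall>F. F \<subseteq> EA \<longrightarrow> sum w F \<le> ft F"
  shows "inP n m E0 f w"
  unfolding inP_def inPj_def
proof (intro conjI ballI allI impI)
  fix j F assume j: "j \<in> Mset m" and F: "F \<subseteq> ES EA j"
  have "F \<subseteq> EA" using F by (auto simp: ES_def)
  then have "sum w F \<le> ft F" using assms(3) by blast
  then show "sum w F \<le> fx j F" using ftot_single[OF j F] by simp
qed (use assms in \<open>auto simp: ES_def\<close>)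

lemma inP_nn: "inP n m E0 f w \<Longrightarrow> e \<in> EA \<Longrightarrow> 0 \<le> w e"
  by (simp add: inP_def)

lemma inP_zero: "inP n m E0 f w \<Longrightarrow> e \<notin> EA \<Longrightarrow> w e = 0"
  by (cases e) (auto simp: inP_def)

end




lemma ereal_shift1: "(ereal (x - y) + S) + ereal y = ereal x + S"
  by (cases S) auto

lemma ereal_shift2: "d \<noteq> -\<infinity> \<Longrightarrow> (ereal a + ((d - ereal y) + S)) + ereal y = ereal a + (d + S)"
  by (cases d; cases S) auto

lemma ereal_shift3: "x + ereal y \<le> ereal c \<Longrightarrow> x \<le> ereal (c - y)"
  by (cases x) auto

context mkt
begin

definition aw :: "(nat \<times> nat \<Rightarrow> real) \<Rightarrow> nat set \<Rightarrow> real" where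
  "aw w T = ft (EB EA T) - (\<Sum>i\<in>T. sum w (EB EA {i}))"

definition JJ :: "(nat \<times> nat \<Rightarrow> real) \<Rightarrow> (nat \<Rightarrow> ereal) \<Rightarrow> bool" where
  "JJ w d \<longleftrightarrow> (\<forall>R F. R \<subseteq> NN \<longrightarrow> F \<subseteq> EA \<longrightarrow> EB EA R \<subseteq> F \<longrightarrow>
                  Gf (aw w) d R \<le> ereal (ft F - sum w F))"

lemma finite_NN: "finite NN"
  by (simp add: Nset_def)

lemma finite_sub_NN: "R \<subseteq> NN \<Longrightarrow> finite R"
  using finite_NN finite_subset by blast

lemma aw_alt: "finite T \<Longrightarrow> aw w T = ft (EB EA T) - sum w (EB EA T)"
  unfolding aw_def using sum_EB[OF finite_EA, of T w] by simp

lemma aw_empty: "aw w {} = 0"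
  by (simp add: aw_def EB_def ftot_empty)

lemma EB_Un: "EB E (A \<union> B) = EB E A \<union> EB E B"
  by (auto simp: EB_def)

lemma EB_Int: "EB E (A \<inter> B) = EB E A \<inter> EB E B"
  by (auto simp: EB_def)

lemma aw_sub:
  assumes "finite T1" "finite T2"
  shows "aw w (T1 \<union> T2) + aw w (T1 \<inter> T2) \<le> aw w T1 + aw w T2"
proof -
  have "ft (EB EA (T1 \<union> T2)) + ft (EB EA (T1 \<inter> T2)) \<le> ft (EB EA T1) + ft (EB EA T2)"
    unfolding EB_Un EB_Int by (intro ftot_sub EB_sub)
  moreover have "(\<Sum>i\<in>T1 \<union> T2. sum w (EB EA {i})) + (\<Sum>i\<in>T1 \<inter> T2. sum w (EB EA {i})) =
      (\<Sum>i\<in>T1. sum w (EB EA {i})) + (\<Sum>i\<in>T2. sum w (EB EA {i}))"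
    using assms by (rule sum.union_inter)
  ultimately show ?thesis unfolding aw_def by linarith
qed

lemma Gf_mono_J:
  assumes J: "JJ w d" and dnn: "\<forall>k\<in>NN. 0 \<le> d k" and AB: "A \<subseteq> B" "B \<subseteq> NN"
  shows "Gf (aw w) d A \<le> Gf (aw w) d B"
proof -
  have fB: "finite B" using AB by (simp add: finite_sub_NN)
  have fA: "finite A" using AB fB finite_subset by blast
  obtain T where T: "T \<subseteq> B" "Gf (aw w) d B = ereal (aw w T) + sum d (B - T)" using Gf_att[OF fB] by blast
  have fT: "finite T" using T fB finite_subset by blast
  have "Gf (aw w) d (T \<inter> A) \<le> ereal (ft (EB EA T) - sum w (EB EA T))"
    using J AB T unfolding JJ_def by (meson EB_mono EB_sub inf_le1 order_trans)
  then have 1: "Gf (aw w) d (T \<inter> A) \<le> ereal (aw w T)" using aw_alt[OF fT] by simp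
  have 2: "Gf (aw w) d A \<le> Gf (aw w) d (T \<inter> A) + sum d (A - (T \<inter> A))"
    using Gf_ext[OF fA] by blast
  have "A - (T \<inter> A) = A - T" by blast
  moreover have "sum d (A - T) \<le> sum d (B - T)"
    using fB AB dnn by (intro sum_mono2) auto
  ultimately have "Gf (aw w) d A \<le> ereal (aw w T) + sum d (B - T)"
    using 1 2 by (metis add_mono order_trans)
  then show ?thesis using T by simp
qed

lemma exist_y:
  assumes w: "inP n m E0 f w" and J: "JJ w d" and dnn: "\<forall>k\<in>NN. 0 \<le> d k" and R: "R \<subseteq> NN"
  shows "\<exists>y\<in>Pwd n m E0 f w d. (\<forall>e. e \<notin> EB EA R \<longrightarrow> y e = 0) \<and>
            Gf (aw w) d R = ereal (sum y (EB EA R))"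
proof -
  have fR: "finite R" using R by (rule finite_sub_NN)
  define Gr where "Gr A = real_of_ereal (Gf (aw w) d A)" for A
  have dnnR: "\<forall>k\<in>A. 0 \<le> d k" if "A \<subseteq> R" for A using that R dnn by blast
  have Gr_eq: "Gf (aw w) d A = ereal (Gr A)" if "A \<subseteq> R" for A
    unfolding Gr_def using Gf_fin[OF _ dnnR[OF that]] that fR finite_subset by blast
  have g0: "Gr {} = 0" using Gr_eq[of "{}"] by (simp add: Gf_empty aw_empty)
  have gmono: "\<forall>A B. A \<subseteq> B \<and> B \<subseteq> R \<longrightarrow> Gr A \<le> Gr B"
  proof (intro allI impI)
    fix A B assume AB: "A \<subseteq> B \<and> B \<subseteq> R"
    then have "Gf (aw w) d A \<le> Gf (aw w) d B" using Gf_mono_J[OF J dnn] R by blast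
    then show "Gr A \<le> Gr B" using Gr_eq AB by (metis ereal_less_eq(3) order_trans)
  qed
  have gsub: "\<forall>A B. A \<subseteq> R \<and> B \<subseteq> R \<longrightarrow> Gr (A \<union> B) + Gr (A \<inter> B) \<le> Gr A + Gr B"
  proof (intro allI impI)
    fix A B assume AB: "A \<subseteq> R \<and> B \<subseteq> R"
    have fA: "finite A" "finite B" using AB fR finite_subset by blast+
    have "Gf (aw w) d (A \<union> B) + Gf (aw w) d (A \<inter> B) \<le> Gf (aw w) d A + Gf (aw w) d B"
      using fA by (intro Gf_submod) (auto intro: aw_sub finite_subset)
    moreover have "A \<union> B \<subseteq> R" "A \<inter> B \<subseteq> R" using AB by auto
    ultimately show "Gr (A \<union> B) + Gr (A \<inter> B) \<le> Gr A + Gr B"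
      using Gr_eq AB by (metis ereal_less_eq(3) plus_ereal.simps(1))
  qed
  obtain u where u: "\<forall>e. 0 \<le> u e" "\<forall>e. e \<notin> R \<longrightarrow> u e = 0"
      "\<forall>A. A \<subseteq> R \<longrightarrow> sum u A \<le> Gr A" "sum u R = Gr R"
    using greedy[OF fR g0 gmono gsub] by blast
  have hc: "\<forall>T F. T \<subseteq> R \<and> F \<subseteq> EA \<and> EB EA T \<subseteq> F \<longrightarrow> sum u T + sum w F \<le> ft F"
  proof (intro allI impI)
    fix T F assume TF: "T \<subseteq> R \<and> F \<subseteq> EA \<and> EB EA T \<subseteq> F"
    then have "Gf (aw w) d T \<le> ereal (ft F - sum w F)" using J R unfolding JJ_def by (meson order_trans)
    then have "Gr T \<le> ft F - sum w F" using Gr_eq TF by simp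
    moreover have "sum u T \<le> Gr T" using u(3) TF by blast
    ultimately show "sum u T + sum w F \<le> ft F" by linarith
  qed
  have unn: "\<forall>k\<in>R. 0 \<le> u k" using u(1) by blast
  obtain y where y: "\<forall>e. 0 \<le> y e" "\<forall>e. e \<notin> EB EA R \<longrightarrow> y e = 0"
      "\<forall>F. F \<subseteq> EA \<longrightarrow> sum w F + sum y F \<le> ft F" "\<forall>k\<in>R. sum y (EB EA {k}) = u k"
    using hall[OF finite_EA fR _ _ ftot_empty unn hc] ftot_mono ftot_sub by blast
  have yR: "sum y (EB EA R) = Gr R"
  proof -
    have "sum y (EB EA R) = (\<Sum>k\<in>R. sum y (EB EA {k}))" using sum_EB[OF finite_EA fR] .
    also have "\<dots> = sum u R" using y(4) by simp
    finally show ?thesis using u(4) by simp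
  qed
  have yout: "\<forall>e. e \<notin> EA \<longrightarrow> y e = 0" using y(2) EB_sub by blast
  have "y \<in> Pwd n m E0 f w d"
    unfolding Pwd_def
  proof (intro CollectI conjI ballI allI impI)
    fix e show "e \<in> EA \<Longrightarrow> 0 \<le> y e" using y(1) by blast
  next
    fix e show "e \<notin> EA \<Longrightarrow> y e = 0" using yout by blast
  next
    show "inP n m E0 f (\<lambda>e. w e + y e)"
    proof (rule inP_intro)
      show "\<forall>e\<in>EA. 0 \<le> w e + y e"
      proof
        fix e assume "e \<in> EA"
        then show "0 \<le> w e + y e" using inP_nn[OF w] y(1) by (meson add_nonneg_nonneg)
      qed
      show "\<forall>e. e \<notin> EA \<longrightarrow> w e + y e = 0" using inP_zero[OF w] yout by simp
      show "\<forall>F. F \<subseteq> EA \<longrightarrow> sum (\<lambda>e. w e + y e) F \<le> ft F" using y(3) by (simp add: sum.distrib)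
    qed
  next
    fix k assume k: "k \<in> NN"
    show "ereal (sum y (EB EA {k})) \<le> d k"
    proof (cases "k \<in> R")
      case True
      have "sum u {k} \<le> Gr {k}" using u(3) True by blast
      then have "sum y (EB EA {k}) \<le> Gr {k}" using y(4) True by simp
      moreover have "Gf (aw w) d {k} \<le> d k" using Gf_single[of "aw w" d k] by (simp add: aw_empty)
      ultimately show ?thesis using Gr_eq[of "{k}"] True by (metis empty_subsetI ereal_less_eq(3) insert_subset order_trans)
    next
      case False
      have "sum y (EB EA {k}) = 0" using y(2) False by (intro sum.neutral) (auto simp: EB_def)
      then show ?thesis using dnn k by (simp add: zero_ereal_def[symmetric])
    qed
  qed
  moreover have "Gf (aw w) d R = ereal (sum y (EB EA R))" using Gr_eq[of R] yR by simp
  ultimately show ?thesis using y(2) by blast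
qed

end




lemma dem_nn: "0 \<le> c k \<Longrightarrow> ereal (p k) \<le> BB k \<Longrightarrow> 0 \<le> dem BB v p c k"
  by (cases "BB k") (auto simp: dem_def)

lemma dem_clinch:
  assumes c: "0 \<le> c i" and p: "ereal (p i) \<le> BB i" and d0: "0 \<le> \<delta>" and dle: "ereal \<delta> \<le> dem BB v p c i"
  shows "dem BB v (p(i := p i + c i * \<delta>)) c i = dem BB v p c i - ereal \<delta> \<and> ereal (p i + c i * \<delta>) \<le> BB i"
proof -
  consider (z) "c i = 0" | (lt) "c i \<noteq> 0" "c i < v i" | (ge) "c i \<noteq> 0" "\<not> c i < v i" by blast
  then show ?thesis
  proof cases
    case z then show ?thesis using p by (simp add: dem_def)
  next
    case lt
    then have cpos: "0 < c i" using c by simp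
    show ?thesis
    proof (cases "BB i")
      case (real b)
      have "ereal \<delta> \<le> ereal ((b - p i) / c i)" using dle lt real by (simp add: dem_def)
      then have "\<delta> \<le> (b - p i) / c i" by simp
      then have "c i * \<delta> \<le> b - p i" using cpos by (simp add: pos_le_divide_eq mult.commute)
      moreover have "(b - (p i + c i * \<delta>)) / c i = (b - p i) / c i - \<delta>" using cpos by (simp add: field_simps)
      ultimately show ?thesis using lt real by (simp add: dem_def)
    next
      case PInf then show ?thesis using lt cpos by (simp add: dem_def)
    next
      case MInf then show ?thesis using p by simp
    qed
  next
    case ge
    then have "\<delta> = 0" using dle d0 by (simp add: dem_def)
    then show ?thesis using ge p by (simp add: dem_def)
  qed
qed

lemma dem_price:
  assumes c: "0 \<le> c l" and p: "ereal (p l) \<le> BB l" and e: "0 < \<epsilon>"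
  shows "dem BB v p (c(l := c l + \<epsilon>)) l \<le> dem BB v p c l"
proof -
  consider (z) "c l = 0" | (lt) "c l \<noteq> 0" "c l < v l" | (ge) "c l \<noteq> 0" "\<not> c l < v l" by blast
  then show ?thesis
  proof cases
    case z then show ?thesis by (simp add: dem_def)
  next
    case lt
    then have cpos: "0 < c l" using c by simp
    have nn: "0 \<le> dem BB v p c l" using dem_nn[of c l p BB v] c p by simp
    show ?thesis
    proof (cases "c l + \<epsilon> < v l")
      case False
      then show ?thesis using nn cpos e by (simp add: dem_def)
    next
      case True
      show ?thesis
      proof (cases "BB l")
        case (real b)
        have "0 \<le> b - p l" using p real by simp
        then have "(b - p l) / (c l + \<epsilon>) \<le> (b - p l) / c l"
          using cpos e by (intro divide_left_mono) auto
        then show ?thesis using True lt real cpos e by (simp add: dem_def)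
      next
        case PInf then show ?thesis using lt True cpos e by (simp add: dem_def)
      next
        case MInf then show ?thesis using p by simp
      qed
    qed
  next
    case ge
    then show ?thesis using c e by (simp add: dem_def)
  qed
qed

context mkt
begin

lemma adm_facts:
  assumes w: "inP n m E0 f w" and dnn: "\<forall>k\<in>NN. 0 \<le> d k" and i: "i \<in> NN"
    and adm: "admissible_xi n m E0 f w d i \<xi>"
  shows "\<forall>e. 0 \<le> \<xi> e" "\<forall>e. e \<notin> EB EA {i} \<longrightarrow> \<xi> e = 0"
        "ereal (sum \<xi> (EB EA {i})) \<le> d i" "inP n m E0 f (\<lambda>e. w e + \<xi> e)"
proof -
  have a1: "\<forall>e\<in>EB EA {i}. 0 \<le> \<xi> e" and a2: "\<forall>e. e \<notin> EB EA {i} \<longrightarrow> \<xi> e = 0"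
    and a3: "Pi_wd n m E0 f w d i \<xi> = Pi_wd n m E0 f w d i (\<lambda>_. 0)"
    using adm unfolding admissible_xi_def by blast+
  show xnn: "\<forall>e. 0 \<le> \<xi> e"
  proof
    fix e show "0 \<le> \<xi> e" by (metis a1 a2 order_refl)
  qed
  show "\<forall>e. e \<notin> EB EA {i} \<longrightarrow> \<xi> e = 0" by (rule a2)
  have z: "(\<lambda>_. 0) \<in> Pwd n m E0 f w d" unfolding Pwd_def using w dnn by (auto simp: zero_ereal_def[symmetric])
  have "(\<lambda>_. 0::real) \<in> Pi_wd n m E0 f w d i (\<lambda>_. 0)"
    unfolding Pi_wd_def using z by (auto intro!: bexI[of _ "\<lambda>_. 0"])
  then have "(\<lambda>_. 0::real) \<in> Pi_wd n m E0 f w d i \<xi>" using a3 by simp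
  then obtain y where y: "y \<in> Pwd n m E0 f w d" "\<forall>e\<in>EB EA {i}. y e = \<xi> e"
    unfolding Pi_wd_def by blast
  have "sum \<xi> (EB EA {i}) = sum y (EB EA {i})" using y(2) by (intro sum.cong) auto
  then show "ereal (sum \<xi> (EB EA {i})) \<le> d i" using y(1) i unfolding Pwd_def by auto
  have yP: "inP n m E0 f (\<lambda>e. w e + y e)" "\<forall>e\<in>EA. 0 \<le> y e" using y(1) unfolding Pwd_def by auto
  show "inP n m E0 f (\<lambda>e. w e + \<xi> e)"
  proof (rule inP_intro)
    show "\<forall>e\<in>EA. 0 \<le> w e + \<xi> e"
    proof
      fix e assume "e \<in> EA"
      then show "0 \<le> w e + \<xi> e" using inP_nn[OF w] xnn by (meson add_nonneg_nonneg)
    qed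
    show "\<forall>e. e \<notin> EA \<longrightarrow> w e + \<xi> e = 0"
      using inP_zero[OF w] a2 EB_sub by (metis add.right_neutral subsetD)
    show "\<forall>F. F \<subseteq> EA \<longrightarrow> sum (\<lambda>e. w e + \<xi> e) F \<le> ft F"
    proof (intro allI impI)
      fix F assume F: "F \<subseteq> EA"
      have "sum (\<lambda>e. w e + \<xi> e) F \<le> sum (\<lambda>e. w e + y e) F"
      proof (rule sum_mono)
        fix e assume "e \<in> F"
        then have "e \<in> EA" using F by blast
        then show "w e + \<xi> e \<le> w e + y e" using y(2) a2 yP(2) by (metis add_left_mono order_refl)
      qed
      also have "\<dots> \<le> ft F" using inP_ub[OF yP(1) F] .
      finally show "sum (\<lambda>e. w e + \<xi> e) F \<le> ft F" .
    qed
  qed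
qed

end




context mkt
begin

lemma clinch_J:
  assumes w: "inP n m E0 f w" and J: "JJ w d" and dnn: "\<forall>k\<in>NN. 0 \<le> d k" and i: "i \<in> NN"
    and adm: "admissible_xi n m E0 f w d i \<xi>"
  shows "JJ (\<lambda>e. w e + \<xi> e) (d(i := d i - ereal (sum \<xi> (EB EA {i}))))"
proof -
  define \<delta> where "\<delta> = sum \<xi> (EB EA {i})"
  define w' where "w' = (\<lambda>e. w e + \<xi> e)"
  define d' where "d' = d(i := d i - ereal \<delta>)"
  note af = adm_facts[OF w dnn i adm]
  have xnn: "\<forall>e. 0 \<le> \<xi> e" and x0: "\<forall>e. e \<notin> EB EA {i} \<longrightarrow> \<xi> e = 0" and dle: "ereal \<delta> \<le> d i"
    using af by (auto simp: \<delta>_def)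
  have xk: "sum \<xi> (EB EA {k}) = (if k = i then \<delta> else 0)" for k
  proof (cases "k = i")
    case True then show ?thesis by (simp add: \<delta>_def)
  next
    case False
    have "sum \<xi> (EB EA {k}) = 0"
    proof (rule sum.neutral, rule ballI)
      fix e assume "e \<in> EB EA {k}"
      then have "e \<notin> EB EA {i}" using False by (auto simp: EB_def)
      then show "\<xi> e = 0" using x0 by blast
    qed
    then show ?thesis using False by simp
  qed
  have aw': "aw w' T = aw w T - (if i \<in> T then \<delta> else 0)" if fT: "finite T" for T
  proof -
    have "(\<Sum>k\<in>T. sum w' (EB EA {k})) = (\<Sum>k\<in>T. sum w (EB EA {k})) + (\<Sum>k\<in>T. sum \<xi> (EB EA {k}))"
      by (simp add: w'_def sum.distrib)
    also have "(\<Sum>k\<in>T. sum \<xi> (EB EA {k})) = (\<Sum>k\<in>T. if k = i then \<delta> else 0)" using xk by simp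
    also have "\<dots> = (if i \<in> T then \<delta> else 0)" using fT by (simp add: sum.delta')
    finally show ?thesis unfolding aw_def by simp
  qed
  have fEi: "finite (EB EA {i})" using finite_EA by (simp add: EB_def)
  have xF: "sum \<xi> F \<le> \<delta>" if F: "F \<subseteq> EA" for F
  proof -
    have fF: "finite F" using F by (rule finite_sub_EA)
    have "sum \<xi> F = sum \<xi> (F \<inter> EB EA {i})"
      using fF x0 by (intro sum.mono_neutral_right) auto
    also have "\<dots> \<le> sum \<xi> (EB EA {i})"
      using fEi xnn by (intro sum_mono2) auto
    finally show ?thesis by (simp add: \<delta>_def)
  qed
  have "JJ w' d'"
    unfolding JJ_def
  proof (intro allI impI)
    fix R F assume R: "R \<subseteq> NN" and F: "F \<subseteq> EA" and RF: "EB EA R \<subseteq> F"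
    have fR: "finite R" using R by (rule finite_sub_NN)
    have fF: "finite F" using F by (rule finite_sub_EA)
    have JR: "Gf (aw w) d R \<le> ereal (ft F - sum w F)" using J R F RF unfolding JJ_def by blast
    show "Gf (aw w') d' R \<le> ereal (ft F - sum w' F)"
    proof (cases "i \<in> R")
      case True
      obtain T where T: "T \<subseteq> R" "Gf (aw w) d R = ereal (aw w T) + sum d (R - T)"
        using Gf_att[OF fR] by blast
      have fT: "finite T" using T(1) fR finite_subset by blast
      have key: "Gf (aw w') d' R + ereal \<delta> \<le> Gf (aw w) d R"
      proof (cases "i \<in> T")
        case True
        have sd: "sum d' (R - T) = sum d (R - T)" using True by (intro sum.cong) (auto simp: d'_def)
        have "Gf (aw w') d' R \<le> ereal (aw w' T) + sum d' (R - T)" using Gf_le[OF fR T(1)] .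
        also have "\<dots> = ereal (aw w T - \<delta>) + sum d (R - T)" using aw'[OF fT] True sd by simp
        finally have "Gf (aw w') d' R + ereal \<delta> \<le> (ereal (aw w T - \<delta>) + sum d (R - T)) + ereal \<delta>"
          by (rule add_right_mono)
        then show ?thesis using T(2) ereal_shift1 by simp
      next
        case False
        have iRT: "i \<in> R - T" using \<open>i \<in> R\<close> False by auto
        have fRT: "finite (R - T)" using fR by simp
        have s1: "sum d' (R - T) = d' i + sum d' (R - T - {i})" by (rule sum.remove[OF fRT iRT])
        have s2: "sum d' (R - T - {i}) = sum d (R - T - {i})" by (intro sum.cong) (auto simp: d'_def)
        have s3: "sum d (R - T) = d i + sum d (R - T - {i})" by (rule sum.remove[OF fRT iRT])
        have sd: "sum d' (R - T) = (d i - ereal \<delta>) + sum d (R - T - {i})" using s1 s2 by (simp add: d'_def)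
        have "Gf (aw w') d' R \<le> ereal (aw w' T) + sum d' (R - T)" using Gf_le[OF fR T(1)] .
        also have "\<dots> = ereal (aw w T) + ((d i - ereal \<delta>) + sum d (R - T - {i}))"
          using aw'[OF fT] False sd by simp
        finally have "Gf (aw w') d' R + ereal \<delta> \<le> (ereal (aw w T) + ((d i - ereal \<delta>) + sum d (R - T - {i}))) + ereal \<delta>"
          by (rule add_right_mono)
        also have "\<dots> = ereal (aw w T) + (d i + sum d (R - T - {i}))"
        proof (rule ereal_shift2)
          show "d i \<noteq> - \<infinity>" using dnn i by auto
        qed
        also have "\<dots> = Gf (aw w) d R" using T(2) s3 by simp
        finally show ?thesis .
      qed
      have "Gf (aw w') d' R + ereal \<delta> \<le> ereal (ft F - sum w F)" using key JR by (rule order_trans)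
      then have "Gf (aw w') d' R \<le> ereal (ft F - sum w F - \<delta>)" by (rule ereal_shift3)
      also have "\<dots> \<le> ereal (ft F - sum w' F)" using xF[OF F] by (simp add: w'_def sum.distrib)
      finally show ?thesis .
    next
      case False
      have eqG: "Gf (aw w') d' R = Gf (aw w) d R"
      proof (rule Gf_cong)
        show "\<forall>T. T \<subseteq> R \<longrightarrow> aw w' T = aw w T"
        proof (intro allI impI)
          fix T assume "T \<subseteq> R"
          then have "finite T" "i \<notin> T" using fR False finite_subset by blast+
          then show "aw w' T = aw w T" using aw' by simp
        qed
        show "\<forall>k\<in>R. d' k = d k" using False by (auto simp: d'_def)
      qed
      obtain y where y: "y \<in> Pwd n m E0 f w d" "\<forall>e. e \<notin> EB EA R \<longrightarrow> y e = 0"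
          "Gf (aw w) d R = ereal (sum y (EB EA R))"
        using exist_y[OF w J dnn R] by blast
      define u where "u k = (if k \<in> NN - {i} then sum y (EB EA {k}) else 0)" for k
      have "u \<in> Pi_wd n m E0 f w d i (\<lambda>_. 0)"
        unfolding Pi_wd_def
      proof (intro CollectI conjI allI impI bexI[of _ y])
        fix k assume "k \<notin> NN - {i}" then show "u k = 0" unfolding u_def by auto
      next
        show "\<forall>e\<in>EB EA {i}. y e = 0"
        proof
          fix e assume "e \<in> EB EA {i}"
          then have "e \<notin> EB EA R" using False by (auto simp: EB_def)
          then show "y e = 0" using y(2) by blast
        qed
      next
        show "\<forall>k\<in>NN - {i}. u k = sum y (EB EA {k})" by (simp add: u_def)
      qed (rule y(1))
      then have "u \<in> Pi_wd n m E0 f w d i \<xi>" using adm unfolding admissible_xi_def by simp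
      then obtain y' where y': "y' \<in> Pwd n m E0 f w d" "\<forall>e\<in>EB EA {i}. y' e = \<xi> e"
          "\<forall>k\<in>NN - {i}. u k = sum y' (EB EA {k})"
        unfolding Pi_wd_def by blast
      have y'P: "inP n m E0 f (\<lambda>e. w e + y' e)" "\<forall>e\<in>EA. 0 \<le> y' e" using y'(1) unfolding Pwd_def by auto
      have ub: "sum w F + sum y' F \<le> ft F" using inP_ub[OF y'P(1) F] by (simp add: sum.distrib)
      have disj: "EB EA R \<inter> (F \<inter> EB EA {i}) = {}" using False by (auto simp: EB_def)
      have fER: "finite (EB EA R)" using finite_EA by (simp add: EB_def)
      have "sum y' (EB EA R \<union> (F \<inter> EB EA {i})) \<le> sum y' F"
        by (rule sum_mono2[OF fF]) (use RF y'P(2) F in auto)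
      moreover have "sum y' (EB EA R \<union> (F \<inter> EB EA {i})) = sum y' (EB EA R) + sum y' (F \<inter> EB EA {i})"
        by (rule sum.union_disjoint) (use fER fF disj in auto)
      moreover have "sum y' (EB EA R) = sum y (EB EA R)"
      proof -
        have "sum y' (EB EA R) = (\<Sum>k\<in>R. sum y' (EB EA {k}))" using sum_EB[OF finite_EA fR] .
        also have "\<dots> = (\<Sum>k\<in>R. sum y (EB EA {k}))"
        proof (rule sum.cong[OF refl])
          fix k assume "k \<in> R"
          then have "k \<in> NN - {i}" using R False by auto
          then show "sum y' (EB EA {k}) = sum y (EB EA {k})" using y'(3) by (simp add: u_def)
        qed
        also have "\<dots> = sum y (EB EA R)" using sum_EB[OF finite_EA fR, of y] by simp
        finally show ?thesis .
      qed
      moreover have "sum y' (F \<inter> EB EA {i}) = sum \<xi> F"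
      proof -
        have "sum y' (F \<inter> EB EA {i}) = sum \<xi> (F \<inter> EB EA {i})" using y'(2) by (intro sum.cong) auto
        also have "\<dots> = sum \<xi> F" using fF x0 by (intro sum.mono_neutral_left) auto
        finally show ?thesis .
      qed
      ultimately have "sum y (EB EA R) + sum \<xi> F + sum w F \<le> ft F" using ub by linarith
      then show ?thesis using eqG y(3) by (simp add: w'_def sum.distrib)
    qed
  qed
  then show ?thesis by (simp add: w'_def d'_def \<delta>_def)
qed

end




context mkt
begin

definition Inv :: "(nat \<Rightarrow> real) \<Rightarrow> (nat \<Rightarrow> real) \<Rightarrow> pca_state \<Rightarrow> bool" where
  "Inv B v s \<longleftrightarrow> inP n m E0 f (sw s) \<and> sd s = dem (Bext n B) v (sp s) (sc s) \<and>
     (\<forall>k. 0 \<le> sc s k) \<and> (\<forall>k\<in>NN. ereal (sp s k) \<le> Bext n B k) \<and> JJ (sw s) (sd s)"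

lemma Inv_dnn: "Inv B v s \<Longrightarrow> \<forall>k\<in>NN. 0 \<le> sd s k"
  unfolding Inv_def by (auto intro: dem_nn)

lemma J_dmono:
  assumes "JJ w d" "\<forall>k\<in>NN. d' k \<le> d k"
  shows "JJ w d'"
  unfolding JJ_def
proof (intro allI impI)
  fix R F assume R: "R \<subseteq> NN" and F: "F \<subseteq> EA" and RF: "EB EA R \<subseteq> F"
  have "Gf (aw w) d' R \<le> Gf (aw w) d R"
    using R assms(2) by (intro Gf_dmono) (auto intro: finite_sub_NN)
  also have "\<dots> \<le> ereal (ft F - sum w F)" using assms(1) R F RF unfolding JJ_def by blast
  finally show "Gf (aw w) d' R \<le> ereal (ft F - sum w F)" .
qed

lemma Inv_init:
  assumes B: "\<forall>i\<in>{1..n}. 0 \<le> B i"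
  shows "Inv B v pca_init"
proof -
  have ftnn: "0 \<le> ft F" for F
    unfolding ftot_def' by (intro sum_nonneg fext_nn) auto
  have w0: "inP n m E0 f (\<lambda>_. 0)" by (rule inP_intro) (auto simp: ftnn)
  have d0: "(\<lambda>_. \<infinity>) = dem (Bext n B) v (\<lambda>_. 0) (\<lambda>_. 0)" by (simp add: dem_def fun_eq_iff)
  have p0: "\<forall>k\<in>NN. ereal 0 \<le> Bext n B k" using B by (auto simp: Bext_def Nset_def)
  have J0: "JJ (\<lambda>_. 0) (\<lambda>_. \<infinity>)"
    unfolding JJ_def
  proof (intro allI impI)
    fix R F assume R: "R \<subseteq> NN" and F: "F \<subseteq> EA" and RF: "EB EA R \<subseteq> F"
    have fR: "finite R" using R by (rule finite_sub_NN)
    have "Gf (aw (\<lambda>_. 0)) (\<lambda>_. \<infinity>) R \<le> ereal (aw (\<lambda>_. 0) R) + sum (\<lambda>_. \<infinity>) (R - R)"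
      using Gf_le[OF fR subset_refl] .
    also have "\<dots> = ereal (ft (EB EA R))" by (simp add: aw_def)
    also have "\<dots> \<le> ereal (ft F)" using ftot_mono[OF RF F] by simp
    finally show "Gf (aw (\<lambda>_. 0)) (\<lambda>_. \<infinity>) R \<le> ereal (ft F - sum (\<lambda>_. 0) F)" by simp
  qed
  show ?thesis unfolding Inv_def pca_init_def using w0 d0 p0 J0 by (simp add: zero_ereal_def)
qed

lemma Inv_clinch_one:
  assumes I: "Inv B v s" and i: "i \<in> NN" and c: "clinch_one n m E0 f B v i s s'"
  shows "Inv B v s'"
proof -
  obtain \<xi> where mx: "maximal_xi n m E0 f (sw s) (sd s) i \<xi>" and
    s': "s' = s\<lparr>sw := (\<lambda>e. sw s e + \<xi> e),
                sp := (sp s)(i := sp s i + sc s i * sum \<xi> (EB EA {i})),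
                sd := (\<lambda>k. dem (Bext n B) v ((sp s)(i := sp s i + sc s i * sum \<xi> (EB EA {i}))) (sc s) k),
                sr := (\<lambda>j. sr s j + sc s i * \<xi> (i, j))\<rparr>"
    using c unfolding clinch_one_def Let_def by blast
  have adm: "admissible_xi n m E0 f (sw s) (sd s) i \<xi>" using mx unfolding maximal_xi_def by blast
  define \<delta> where "\<delta> = sum \<xi> (EB EA {i})"
  define p' where "p' = (sp s)(i := sp s i + sc s i * \<delta>)"
  have w: "inP n m E0 f (sw s)" and dd: "sd s = dem (Bext n B) v (sp s) (sc s)"
    and cnn: "\<forall>k. 0 \<le> sc s k" and pB: "\<forall>k\<in>NN. ereal (sp s k) \<le> Bext n B k" and J: "JJ (sw s) (sd s)"
    using I unfolding Inv_def by blast+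
  have dnn: "\<forall>k\<in>NN. 0 \<le> sd s k" using Inv_dnn[OF I] .
  note af = adm_facts[OF w dnn i adm]
  have d0: "0 \<le> \<delta>" unfolding \<delta>_def using af(1) by (intro sum_nonneg) blast
  have dle: "ereal \<delta> \<le> dem (Bext n B) v (sp s) (sc s) i" using af(3) dd by (simp add: \<delta>_def)
  note dc = dem_clinch[OF cnn[rule_format] pB[rule_format, OF i] d0 dle]
  have sw': "sw s' = (\<lambda>e. sw s e + \<xi> e)" and sp': "sp s' = p'" and sc': "sc s' = sc s"
    and sd': "sd s' = dem (Bext n B) v p' (sc s)"
    using s' by (simp_all add: p'_def \<delta>_def)
  have sdeq: "sd s' = (sd s)(i := sd s i - ereal \<delta>)"
  proof
    fix k show "sd s' k = ((sd s)(i := sd s i - ereal \<delta>)) k"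
    proof (cases "k = i")
      case True then show ?thesis using sd' dc dd by (simp add: p'_def)
    next
      case False then show ?thesis using sd' dd by (simp add: p'_def dem_def)
    qed
  qed
  have "JJ (sw s') (sd s')" using clinch_J[OF w J dnn i adm] sw' sdeq by (simp add: \<delta>_def)
  moreover have "\<forall>k\<in>NN. ereal (sp s' k) \<le> Bext n B k" using pB dc sp' by (simp add: p'_def)
  ultimately show ?thesis unfolding Inv_def using af(4) sw' sd' sp' sc' cnn by simp
qed

lemma Inv_clinch_from:
  assumes "clinch_from n m E0 f B v k s s1" "1 \<le> k" "Inv B v s"
  shows "Inv B v s1"
  using assms
proof (induction rule: clinch_from.induct)
  case (cf_done k s) then show ?case by simp
next
  case (cf_next k s s' s'')
  have "k \<in> NN" using cf_next.hyps(1) cf_next.prems(1) by (simp add: Nset_def)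
  then have "Inv B v s'" using Inv_clinch_one cf_next.hyps(2) cf_next.prems(2) by blast
  then show ?case using cf_next.IH cf_next.prems(1) by simp
qed

lemma Inv_iter:
  assumes I: "Inv B v s" and e: "0 < \<epsilon>" and it: "pca_iter n m E0 f B v \<epsilon> s s''"
  shows "Inv B v s''"
proof -
  obtain s1 where cf: "clinch_from n m E0 f B v 1 s s1" and
    s'': "s'' = s1\<lparr>sc := (sc s1)(sl s1 := sc s1 (sl s1) + \<epsilon>),
                  sd := (sd s1)(sl s1 := dem (Bext n B) v (sp s1) ((sc s1)(sl s1 := sc s1 (sl s1) + \<epsilon>)) (sl s1)),
                  sl := (if sl s1 \<ge> n + m then 1 else sl s1 + 1)\<rparr>"
    using it unfolding pca_iter_def Let_def by blast
  have I1: "Inv B v s1" using Inv_clinch_from[OF cf _ I] by simp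
  define l where "l = sl s1"
  define c' where "c' = (sc s1)(l := sc s1 l + \<epsilon>)"
  have w: "inP n m E0 f (sw s1)" and dd: "sd s1 = dem (Bext n B) v (sp s1) (sc s1)"
    and cnn: "\<forall>k. 0 \<le> sc s1 k" and pB: "\<forall>k\<in>NN. ereal (sp s1 k) \<le> Bext n B k" and J: "JJ (sw s1) (sd s1)"
    using I1 unfolding Inv_def by blast+
  have sw'': "sw s'' = sw s1" and sp'': "sp s'' = sp s1" and sc'': "sc s'' = c'"
    and sd'': "sd s'' = (sd s1)(l := dem (Bext n B) v (sp s1) c' l)"
    using s'' by (simp_all add: l_def c'_def)
  have sdeq: "sd s'' = dem (Bext n B) v (sp s1) c'"
  proof
    fix k show "sd s'' k = dem (Bext n B) v (sp s1) c' k"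
      using sd'' dd by (cases "k = l") (simp_all add: c'_def dem_def)
  qed
  have cnn': "\<forall>k. 0 \<le> c' k" using cnn e by (simp add: c'_def)
  have dle: "\<forall>k\<in>NN. sd s'' k \<le> sd s1 k"
  proof
    fix k assume k: "k \<in> NN"
    show "sd s'' k \<le> sd s1 k"
    proof (cases "k = l")
      case True
      have "dem (Bext n B) v (sp s1) c' l \<le> dem (Bext n B) v (sp s1) (sc s1) l"
        unfolding c'_def by (rule dem_price) (use cnn pB k True e in auto)
      then show ?thesis using sd'' dd True by simp
    next
      case False then show ?thesis using sd'' by simp
    qed
  qed
  have "JJ (sw s'') (sd s'')" using J_dmono[OF J dle] sw'' by simp
  then show ?thesis unfolding Inv_def using w sw'' sp'' sc'' sdeq cnn' pB by simp
qed

lemma Inv_reach: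
  assumes "pca_reach n m E0 f B v \<epsilon> s" "\<forall>i\<in>{1..n}. 0 \<le> B i" "0 < \<epsilon>"
  shows "Inv B v s"
  using assms(1)
proof (induction rule: pca_reach.induct)
  case init then show ?case using Inv_init[OF assms(2)] by simp
next
  case (step s s') then show ?case using Inv_iter assms(3) by blast
qed

lemma final:
  assumes I: "Inv B v s" and S: "S \<subseteq> NN"
  shows "gfun n m E0 f (\<lambda>i. sum (sw s) (EB EA {i})) (sd s) S =
         Min {ereal (ft (EB EA S') - (\<Sum>i\<in>S'. sum (sw s) (EB EA {i}))) + sum (sd s) (S - S') | S'. S' \<subseteq> S}"
proof -
  define w where "w = sw s"
  define d where "d = sd s"
  have J: "JJ w d" using I unfolding Inv_def w_def d_def by blast
  have dnn: "\<forall>k\<in>NN. 0 \<le> d k" using Inv_dnn[OF I] by (simp add: d_def)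
  have fS: "finite S" using S by (rule finite_sub_NN)
  have rhs: "{ereal (ft (EB EA S') - (\<Sum>i\<in>S'. sum w (EB EA {i}))) + sum d (S - S') | S'. S' \<subseteq> S} =
      (\<lambda>T. ereal (aw w T) + sum d (S - T)) ` Pow S"
    by (auto simp: aw_def)
  define M where "M S' = Min ((\<lambda>S''. ereal (aw w S'')) ` {S''. S' \<subseteq> S'' \<and> S'' \<subseteq> NN})" for S'
  have inner: "{ereal (ft (EB EA S'') - sum (\<lambda>i. sum w (EB EA {i})) S'') | S''. S' \<subseteq> S'' \<and> S'' \<subseteq> NN} =
      (\<lambda>S''. ereal (aw w S'')) ` {S''. S' \<subseteq> S'' \<and> S'' \<subseteq> NN}" for S'
    by (auto simp: aw_def)
  have lhs: "gfun n m E0 f (\<lambda>i. sum w (EB EA {i})) d S = Min ((\<lambda>S'. M S' + sum d (S - S')) ` Pow S)"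
    unfolding gfun_def inner M_def by (intro arg_cong[where f=Min]) auto
  have finI: "finite {S''. S' \<subseteq> S'' \<and> S'' \<subseteq> NN}" for S'
    by (rule finite_subset[of _ "Pow NN"]) (auto simp: finite_NN)
  have M_le: "M S' \<le> ereal (aw w S'')" if "S' \<subseteq> S''" "S'' \<subseteq> NN" for S' S''
    unfolding M_def using that finI by (intro Min_le) auto
  have M_att: "\<exists>S''. S' \<subseteq> S'' \<and> S'' \<subseteq> NN \<and> M S' = ereal (aw w S'')" if "S' \<subseteq> NN" for S'
  proof -
    have "M S' \<in> (\<lambda>S''. ereal (aw w S'')) ` {S''. S' \<subseteq> S'' \<and> S'' \<subseteq> NN}"
      unfolding M_def using finI that by (intro Min_in) auto
    then show ?thesis by auto
  qed
  define Os where "Os = (\<lambda>S'. M S' + sum d (S - S')) ` Pow S"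
  have finO: "finite Os" "Os \<noteq> {}" using fS by (auto simp: Os_def)
  have "Min Os = Gf (aw w) d S"
  proof (rule antisym)
    obtain T where T: "T \<subseteq> S" "Gf (aw w) d S = ereal (aw w T) + sum d (S - T)" using Gf_att[OF fS] by blast
    have "M T + sum d (S - T) \<in> Os" using T by (auto simp: Os_def)
    then have "Min Os \<le> M T + sum d (S - T)" using finO by (intro Min_le) auto
    also have "\<dots> \<le> ereal (aw w T) + sum d (S - T)" using M_le[of T T] T S by (intro add_right_mono) auto
    finally show "Min Os \<le> Gf (aw w) d S" using T by simp
  next
    have "Min Os \<in> Os" using finO by (rule Min_in)
    then obtain S' where S': "S' \<subseteq> S" "Min Os = M S' + sum d (S - S')" by (auto simp: Os_def)
    have S'N: "S' \<subseteq> NN" using S'(1) S by (rule order_trans)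
    obtain S'' where S'': "S' \<subseteq> S''" "S'' \<subseteq> NN" "M S' = ereal (aw w S'')" using M_att[OF S'N] by blast
    have fS'': "finite S''" using S''(2) by (rule finite_sub_NN)
    have "S - (S'' \<inter> S) = S - S''" by blast
    then have a: "Gf (aw w) d S \<le> Gf (aw w) d (S'' \<inter> S) + sum d (S - S'')"
      using Gf_ext[OF fS, of "S'' \<inter> S"] by simp
    have "Gf (aw w) d (S'' \<inter> S) \<le> ereal (ft (EB EA S'') - sum w (EB EA S''))"
      using J S''(2) unfolding JJ_def by (meson EB_mono EB_sub inf_le1 order_trans)
    then have b: "Gf (aw w) d (S'' \<inter> S) \<le> ereal (aw w S'')" using aw_alt[OF fS''] by simp
    have c: "sum d (S - S'') \<le> sum d (S - S')"
      using fS dnn S S'' by (intro sum_mono2) auto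
    have "Gf (aw w) d S \<le> ereal (aw w S'') + sum d (S - S')"
      using a b c by (meson add_mono order_trans)
    then show "Gf (aw w) d S \<le> Min Os" using S' S'' by simp
  qed
  then show ?thesis using lhs rhs by (simp add: w_def d_def Os_def Gf_def)
qed

end


theorem proposition3p8:
  fixes n m :: nat and E0 :: "(nat \<times> nat) set"
    and f :: "nat \<Rightarrow> (nat \<times> nat) set \<Rightarrow> real"
    and B :: "nat \<Rightarrow> real" and v :: "nat \<Rightarrow> real" and \<epsilon> :: real
    and s :: pca_state and S :: "nat set"
  assumes E0: "E0 \<subseteq> {1..n} \<times> {1..m}"
    and f_nonneg: "\<forall>j\<in>{1..m}. \<forall>F. F \<subseteq> ES E0 j \<longrightarrow> 0 \<le> f j F"
    and f_empty: "\<forall>j\<in>{1..m}. f j {} = 0"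
    and f_mono: "\<forall>j\<in>{1..m}. \<forall>F G. F \<subseteq> G \<and> G \<subseteq> ES E0 j \<longrightarrow> f j F \<le> f j G"
    and f_submod: "\<forall>j\<in>{1..m}. \<forall>F G. F \<subseteq> ES E0 j \<and> G \<subseteq> ES E0 j \<longrightarrow>
                       f j (F \<union> G) + f j (F \<inter> G) \<le> f j F + f j G"
    and B_nonneg: "\<forall>i\<in>{1..n}. 0 \<le> B i"
    and eps: "\<epsilon> > 0"
    and bids: "\<forall>i\<in>{1..n+m}. \<exists>k::nat. k \<ge> 1 \<and> v i = real k * \<epsilon>"
    and reach: "pca_reach n m E0 f B v \<epsilon> s"
    and running: "\<exists>k\<in>{1..n+m}. sd s k \<noteq> 0"
    and S: "S \<subseteq> {1..n+m}"
  shows "gfun n m E0 f (\<lambda>i. sum (sw s) (EB (Eall n m E0) {i})) (sd s) S =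
         Min {ereal (ftot n m E0 f (EB (Eall n m E0) S') - (\<Sum>i\<in>S'. sum (sw s) (EB (Eall n m E0) {i})))
              + sum (sd s) (S - S') | S'. S' \<subseteq> S}"
proof -
  interpret mkt n m E0 f
    by (rule mkt.intro[OF E0 f_nonneg f_empty f_mono f_submod])
  have I: "Inv B v s" using Inv_reach[OF reach B_nonneg eps] .
  have S': "S \<subseteq> Nset n m" using S by (simp add: Nset_def)
  show ?thesis using final[OF I S'] .
qed

end
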